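(* Let $\mathcal{W}\subseteq\{x\in\mathbb{R}^d:\|x\|_2\le 1\}$ be closed and convex with $0\in\mathcal{W}$, let $L>0$, and let $f_1,\dots,f_T$ be convex differentiable functions whose gradients are $L$-Lipschitz on $\mathcal{W}$: $\|\nabla f_t(x)-\nabla f_t(x')\|_2\le L\|x-x'\|_2$. Set $f_0\equiv 0$ and $z_0=0$, fix $\eta\in(0,1]$, and for $t=1,\dots,T$ define $$x_t=\arg\min_{x\in\mathcal{W}}\Bigl\{\langle x,\nabla f_{t-1}(z_{t-1})\rangle+\tfrac{L}{2\eta}\|x-z_{t-1}\|_2^2\Bigr\},\qquad z_t=\arg\min_{x\in\mathcal{W}}\Bigl\{\Bigl\langle x,\sum_{\tau=1}^t\nabla f_\tau(z_{\tau-1})\Bigr\rangle+\tfrac{L}{2\eta}\|x\|_2^2\Bigr\}.$$ Then $$\sum_{t=1}^T f_t(x_t)\le\min_{x\in\mathcal{W}}\Bigl[\tfrac{L}{2\eta}\|x\|_2^2+\sum_{t=1}^T\bigl(f_t(z_{t-1})+\langle x-z_{t-1},\nabla f_t(z_{t-1})\rangle\bigr)\Bigr]+\frac{\eta}{2L}\sum_{t=0}^{T-1}\|\nabla f_{t+1}(z_t)-\nabla f_t(z_t)\|_2^2.$$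
   Context: The iterates $x_t$ (decisions) and $z_t$ (search points) constitute the "improved follow-the-regularized-leader" (IFTRL) algorithm for online convex optimization: $x_t$ is played before $f_t$ is revealed, then $z_t$ is computed. *)

theory Defs
  imports "HOL-Analysis.Analysis"
begin

end

theory Submission
  imports Defs
begin

lemma seg_in:
  fixes W :: "'a::real_vector set"
  assumes "convex W" "x \<in> W" "z \<in> W" "0 \<le> s" "s \<le> 1"
  shows "z + s *\<^sub>R (x - z) \<in> W"
proof -
  have "(1 - s) *\<^sub>R z + s *\<^sub>R x \<in> W" using convexD_alt[OF assms(1,3,2,4,5)] .
  moreover have "(1 - s) *\<^sub>R z + s *\<^sub>R x = z + s *\<^sub>R (x - z)" by (simp add: algebra_simps)
  ultimately show ?thesis by simp
qed

lemma descent: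
  fixes f :: "'a::euclidean_space \<Rightarrow> real" and g :: "'a \<Rightarrow> 'a"
  assumes deriv: "\<And>y. (f has_derivative (\<lambda>h. g y \<bullet> h)) (at y)"
    and lip: "\<And>y y'. y \<in> W \<Longrightarrow> y' \<in> W \<Longrightarrow> norm (g y - g y') \<le> L * norm (y - y')"
    and cv: "convex W" and xW: "x \<in> W" and zW: "z \<in> W" and L: "L \<ge> 0"
  shows "f x \<le> f z + g z \<bullet> (x - z) + L / 2 * (norm (x - z))\<^sup>2"
proof -
  define d where "d = x - z"
  define \<phi> where "\<phi> s = f (z + s *\<^sub>R d) - s * (g z \<bullet> d) - L / 2 * s\<^sup>2 * (norm d)\<^sup>2" for s
  have D: "DERIV \<phi> s :> (g (z + s *\<^sub>R d) \<bullet> d - g z \<bullet> d - L * s * (norm d)\<^sup>2)" for s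
  proof -
    have "((\<lambda>s. z + s *\<^sub>R d) has_derivative (\<lambda>h. h *\<^sub>R d)) (at s)"
      by (auto intro!: derivative_eq_intros)
    from has_derivative_compose[OF this deriv]
    have "((\<lambda>s. f (z + s *\<^sub>R d)) has_derivative (\<lambda>h. g (z + s *\<^sub>R d) \<bullet> (h *\<^sub>R d))) (at s)" .
    then have "((\<lambda>s. f (z + s *\<^sub>R d)) has_derivative (\<lambda>h. g (z + s *\<^sub>R d) \<bullet> d * h)) (at s)"
      by (simp add: mult.commute)
    then have "DERIV (\<lambda>s. f (z + s *\<^sub>R d)) s :> g (z + s *\<^sub>R d) \<bullet> d"
      by (simp add: has_field_derivative_def)
    then show ?thesis unfolding \<phi>_def
      by (auto intro!: derivative_eq_intros)
  qed
  have "\<phi> 1 \<le> \<phi> 0"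
  proof (rule DERIV_nonpos_imp_nonincreasing[of 0 1])
    fix s :: real assume s: "0 \<le> s" "s \<le> 1"
    have zs: "z + s *\<^sub>R d \<in> W" using seg_in[OF cv xW zW s] by (simp add: d_def)
    have "g (z + s *\<^sub>R d) \<bullet> d - g z \<bullet> d = (g (z + s *\<^sub>R d) - g z) \<bullet> d" by (simp add: inner_diff_left)
    also have "\<dots> \<le> norm (g (z + s *\<^sub>R d) - g z) * norm d" by (rule norm_cauchy_schwarz)
    also have "\<dots> \<le> L * norm (s *\<^sub>R d) * norm d"
      using lip[OF zs zW] by (simp add: mult_right_mono)
    also have "\<dots> = L * s * (norm d)\<^sup>2" using s by (simp add: power2_eq_square)
    finally show "\<exists>y. DERIV \<phi> s :> y \<and> y \<le> 0" using D by force
  qed simp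
  then show ?thesis unfolding \<phi>_def d_def by (simp add: inner_commute)
qed

lemma vi:
  fixes W :: "'a::real_inner set"
  assumes cv: "convex W" and pW: "p \<in> W" and a: "a > 0"
    and mn: "\<And>y. y \<in> W \<Longrightarrow> p \<bullet> G + a * (norm (p - c))\<^sup>2 \<le> y \<bullet> G + a * (norm (y - c))\<^sup>2"
    and yW: "y \<in> W"
  shows "0 \<le> (y - p) \<bullet> (G + (2 * a) *\<^sub>R (p - c))"
proof (rule ccontr)
  define d where "d = y - p"
  define \<delta> where "\<delta> = (y - p) \<bullet> (G + (2 * a) *\<^sub>R (p - c))"
  assume "\<not> ?thesis"
  then have dn: "\<delta> < 0" by (simp add: \<delta>_def)
  have dd: "0 \<le> d \<bullet> d" by simp
  define s where "s = min 1 (- \<delta> / (a * (d \<bullet> d) + 1))"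
  have "0 \<le> a * (d \<bullet> d)" using a dd by simp
  then have den: "a * (d \<bullet> d) + 1 > 0" by linarith
  have s0: "s > 0" using dn den by (simp add: s_def divide_neg_pos)
  have s1: "s \<le> 1" by (simp add: s_def)
  have "s \<le> - \<delta> / (a * (d \<bullet> d) + 1)" by (simp add: s_def)
  then have "s * (a * (d \<bullet> d) + 1) \<le> - \<delta>" using den by (simp add: field_simps)
  then have key: "a * s * (d \<bullet> d) < - \<delta>" using s0 by (simp add: algebra_simps)
  have qW: "p + s *\<^sub>R d \<in> W" using seg_in[OF cv yW pW] s0 s1 by (simp add: d_def)
  have exp: "(p + s *\<^sub>R d) \<bullet> G + a * (norm (p + s *\<^sub>R d - c))\<^sup>2
       = p \<bullet> G + a * (norm (p - c))\<^sup>2 + s * \<delta> + a * s\<^sup>2 * (d \<bullet> d)"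
    unfolding \<delta>_def d_def power2_norm_eq_inner
    by (simp add: inner_simps algebra_simps power2_eq_square inner_commute)
  have "s * \<delta> + a * s\<^sup>2 * (d \<bullet> d) = s * (\<delta> + a * s * (d \<bullet> d))" by (simp add: algebra_simps power2_eq_square)
  also have "\<dots> < 0" using s0 key by (simp add: mult_pos_neg)
  finally have "(p + s *\<^sub>R d) \<bullet> G + a * (norm (p + s *\<^sub>R d - c))\<^sup>2 < p \<bullet> G + a * (norm (p - c))\<^sup>2"
    using exp by linarith
  with mn[OF qW] show False by linarith
qed

lemma step_alg:
  fixes x zt zp c m G :: "'a::real_inner"
  assumes L: "0 < L" and e: "0 < \<eta>" "\<eta> \<le> 1" and a: "a = L / (2 * \<eta>)"
    and A: "fx \<le> fz + c \<bullet> (x - zp) + L / 2 * (norm (x - zp))\<^sup>2"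
    and B: "0 \<le> (zt - x) \<bullet> (m + (2 * a) *\<^sub>R (x - zp))"
    and C: "0 \<le> (zt - zp) \<bullet> (G + (2 * a) *\<^sub>R zp)"
  shows "fx \<le> (zt \<bullet> (G + c) + a * (norm zt)\<^sup>2 + (fz - zp \<bullet> c)) - (zp \<bullet> G + a * (norm zp)\<^sup>2)
           + \<eta> / (2 * L) * (norm (c - m))\<^sup>2"
proof -
  have apos: "a > 0" using a L e by simp
  have La: "L = \<eta> * (2 * a)" using a e by (simp add: field_simps)
  have "\<eta> * (2 * a) \<le> 1 * (2 * a)" using e apos by (intro mult_right_mono) auto
  then have aL: "L / 2 \<le> a" using La by simp
  have B': "m \<bullet> (x - zt) \<le> a * ((norm (zt - zp))\<^sup>2 - (norm (x - zp))\<^sup>2 - (norm (zt - x))\<^sup>2)"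
    using B unfolding power2_norm_eq_inner by (simp add: inner_simps algebra_simps inner_commute)
  have C': "a * (norm (zt - zp))\<^sup>2 \<le> zt \<bullet> G + a * (norm zt)\<^sup>2 - (zp \<bullet> G + a * (norm zp)\<^sup>2)"
    using C unfolding power2_norm_eq_inner by (simp add: inner_simps algebra_simps inner_commute)
  define k where "k = \<eta> / L"
  have k: "k > 0" using L e by (simp add: k_def)
  have ak: "a = 1 / (2 * k)" using a by (simp add: k_def)
  have Y0: "norm (c - m) * norm (x - zt) \<le> k / 2 * (norm (c - m))\<^sup>2 + 1 / (2 * k) * (norm (x - zt))\<^sup>2"
  proof -
    have "0 \<le> (k * norm (c - m) - norm (x - zt))\<^sup>2" by simp
    then have "2 * k * (norm (c - m) * norm (x - zt)) \<le> k\<^sup>2 * (norm (c - m))\<^sup>2 + (norm (x - zt))\<^sup>2"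
      by (simp add: power2_eq_square algebra_simps)
    then show ?thesis using k by (simp add: field_simps power2_eq_square)
  qed
  have Y: "(c - m) \<bullet> (x - zt) \<le> \<eta> / (2 * L) * (norm (c - m))\<^sup>2 + a * (norm (zt - x))\<^sup>2"
  proof -
    have "(c - m) \<bullet> (x - zt) \<le> norm (c - m) * norm (x - zt)" by (rule norm_cauchy_schwarz)
    also note Y0
    also have "k / 2 = \<eta> / (2 * L)" by (simp add: k_def)
    finally show ?thesis using ak by (simp add: norm_minus_commute)
  qed
  have sp: "c \<bullet> (x - zp) = c \<bullet> (zt - zp) + m \<bullet> (x - zt) + (c - m) \<bullet> (x - zt)"
    by (simp add: inner_simps algebra_simps)
  have "(L / 2 - a) * (norm (x - zp))\<^sup>2 \<le> 0" using aL by (simp add: mult_nonpos_nonneg)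
  then show ?thesis using A B' C' Y sp by (simp add: inner_simps algebra_simps inner_commute)
qed


theorem mainTheorem2:
  fixes W :: "'a::euclidean_space set"
    and f :: "nat \<Rightarrow> 'a \<Rightarrow> real"
    and g :: "nat \<Rightarrow> 'a \<Rightarrow> 'a"
    and x z :: "nat \<Rightarrow> 'a"
    and L \<eta> :: real and T :: nat
  assumes W_closed: "closed W" and W_convex: "convex W"
    and W_ball: "W \<subseteq> cball 0 1" and W_zero: "0 \<in> W"
    and L_pos: "L > 0"
    and f_convex: "\<And>t. t \<in> {1..T} \<Longrightarrow> convex_on UNIV (f t)"
    and f_grad: "\<And>t y. t \<le> T \<Longrightarrow> (f t has_derivative (\<lambda>h. g t y \<bullet> h)) (at y)"
    and g_lip: "\<And>t y y'. t \<in> {1..T} \<Longrightarrow> y \<in> W \<Longrightarrow> y' \<in> W \<Longrightarrow>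
                  norm (g t y - g t y') \<le> L * norm (y - y')"
    and f_zero: "f 0 = (\<lambda>_. 0)"
    and z_zero: "z 0 = 0"
    and eta: "0 < \<eta>" "\<eta> \<le> 1"
    and x_def: "\<And>t. t \<in> {1..T} \<Longrightarrow>
       is_arg_min (\<lambda>y. y \<bullet> g (t - 1) (z (t - 1)) + L / (2 * \<eta>) * (norm (y - z (t - 1)))\<^sup>2)
                  (\<lambda>y. y \<in> W) (x t)"
    and z_def: "\<And>t. t \<in> {1..T} \<Longrightarrow>
       is_arg_min (\<lambda>y. y \<bullet> (\<Sum>\<tau>=1..t. g \<tau> (z (\<tau> - 1))) + L / (2 * \<eta>) * (norm y)\<^sup>2)
                  (\<lambda>y. y \<in> W) (z t)"
  shows "(\<Sum>t=1..T. f t (x t))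
     \<le> (INF u\<in>W. L / (2 * \<eta>) * (norm u)\<^sup>2
            + (\<Sum>t=1..T. f t (z (t - 1)) + (u - z (t - 1)) \<bullet> g t (z (t - 1))))
       + \<eta> / (2 * L) * (\<Sum>t=0..<T. (norm (g (t + 1) (z t) - g t (z t)))\<^sup>2)"
proof -
  define a where "a = L / (2 * \<eta>)"
  have apos: "a > 0" using L_pos eta by (simp add: a_def)
  define G where "G n = (\<Sum>\<tau>=1..n. g \<tau> (z (\<tau> - 1)))" for n
  define \<Psi> where "\<Psi> n = z n \<bullet> G n + a * (norm (z n))\<^sup>2
      + (\<Sum>\<tau>=1..n. f \<tau> (z (\<tau> - 1)) - z (\<tau> - 1) \<bullet> g \<tau> (z (\<tau> - 1)))" for n
  define E where "E t = \<eta> / (2 * L) * (norm (g (t + 1) (z t) - g t (z t)))\<^sup>2" for t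
  have zW: "z n \<in> W" if "n \<le> T" for n
  proof (cases "n = 0")
    case True then show ?thesis using z_zero W_zero by simp
  next
    case False then show ?thesis using z_def[of n] that by (simp add: is_arg_min_def)
  qed
  have ind: "n \<le> T \<Longrightarrow> (\<Sum>t=1..n. f t (x t)) \<le> \<Psi> n + (\<Sum>t<n. E t)" for n
  proof (induction n)
    case 0
    then show ?case by (simp add: \<Psi>_def G_def z_zero)
  next
    case (Suc n)
    have nT: "n \<le> T" "Suc n \<in> {1..T}" using Suc.prems by auto
    have zn: "z n \<in> W" using zW nT by simp
    have zs: "z (Suc n) \<in> W" using zW Suc.prems by simp
    have xs: "x (Suc n) \<in> W" using x_def[OF nT(2)] by (simp add: is_arg_min_def)
    have A: "f (Suc n) (x (Suc n)) \<le> f (Suc n) (z n) + g (Suc n) (z n) \<bullet> (x (Suc n) - z n)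
               + L / 2 * (norm (x (Suc n) - z n))\<^sup>2"
      by (rule descent[where W=W]) (use f_grad Suc.prems g_lip nT W_convex xs zn L_pos in auto)
    have B: "0 \<le> (z (Suc n) - x (Suc n)) \<bullet> (g n (z n) + (2 * a) *\<^sub>R (x (Suc n) - z n))"
    proof (rule vi[OF W_convex xs apos _ zs])
      fix y assume "y \<in> W"
      then show "x (Suc n) \<bullet> g n (z n) + a * (norm (x (Suc n) - z n))\<^sup>2
          \<le> y \<bullet> g n (z n) + a * (norm (y - z n))\<^sup>2"
        using x_def[OF nT(2)] unfolding is_arg_min_def a_def by (auto simp: not_less)
    qed
    have C: "0 \<le> (z (Suc n) - z n) \<bullet> (G n + (2 * a) *\<^sub>R z n)"
    proof (cases "n = 0")
      case True then show ?thesis by (simp add: G_def z_zero)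
    next
      case False
      then have n1: "n \<in> {1..T}" using nT by auto
      have "0 \<le> (z (Suc n) - z n) \<bullet> (G n + (2 * a) *\<^sub>R (z n - 0))"
      proof (rule vi[OF W_convex zn apos _ zs])
        fix y assume "y \<in> W"
        then show "z n \<bullet> G n + a * (norm (z n - 0))\<^sup>2 \<le> y \<bullet> G n + a * (norm (y - 0))\<^sup>2"
          using z_def[OF n1] unfolding is_arg_min_def a_def G_def by (auto simp: not_less)
      qed
      then show ?thesis by simp
    qed
    have st: "f (Suc n) (x (Suc n)) \<le> (z (Suc n) \<bullet> (G n + g (Suc n) (z n)) + a * (norm (z (Suc n)))\<^sup>2
           + (f (Suc n) (z n) - z n \<bullet> g (Suc n) (z n))) - (z n \<bullet> G n + a * (norm (z n))\<^sup>2)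
           + \<eta> / (2 * L) * (norm (g (Suc n) (z n) - g n (z n)))\<^sup>2"
      by (rule step_alg[OF L_pos eta a_def A B C])
    have GS: "G (Suc n) = G n + g (Suc n) (z n)" by (simp add: G_def)
    have PS: "\<Psi> (Suc n) = z (Suc n) \<bullet> (G n + g (Suc n) (z n)) + a * (norm (z (Suc n)))\<^sup>2
      + (\<Sum>\<tau>=1..n. f \<tau> (z (\<tau> - 1)) - z (\<tau> - 1) \<bullet> g \<tau> (z (\<tau> - 1)))
      + (f (Suc n) (z n) - z n \<bullet> g (Suc n) (z n))"
      unfolding \<Psi>_def GS by simp
    have Pn: "\<Psi> n = z n \<bullet> G n + a * (norm (z n))\<^sup>2
      + (\<Sum>\<tau>=1..n. f \<tau> (z (\<tau> - 1)) - z (\<tau> - 1) \<bullet> g \<tau> (z (\<tau> - 1)))" by (simp add: \<Psi>_def)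
    have En: "E n = \<eta> / (2 * L) * (norm (g (Suc n) (z n) - g n (z n)))\<^sup>2" by (simp add: E_def)
    show ?case using Suc.IH[OF nT(1)] st PS Pn En by simp
  qed
  have main: "(\<Sum>t=1..T. f t (x t)) \<le> \<Psi> T + (\<Sum>t<T. E t)" using ind by simp
  have bound: "\<Psi> T \<le> L / (2 * \<eta>) * (norm u)\<^sup>2
            + (\<Sum>t=1..T. f t (z (t - 1)) + (u - z (t - 1)) \<bullet> g t (z (t - 1)))" if uW: "u \<in> W" for u
  proof -
    have zmin: "z T \<bullet> G T + a * (norm (z T))\<^sup>2 \<le> u \<bullet> G T + a * (norm u)\<^sup>2"
    proof (cases "T = 0")
      case True then show ?thesis using apos by (simp add: G_def z_zero)
    next
      case False
      then have "T \<in> {1..T}" by auto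
      from z_def[OF this] uW show ?thesis unfolding is_arg_min_def a_def G_def by (auto simp: not_less)
    qed
    have "(\<Sum>t=1..T. f t (z (t - 1)) + (u - z (t - 1)) \<bullet> g t (z (t - 1)))
        = u \<bullet> G T + (\<Sum>t=1..T. f t (z (t - 1)) - z (t - 1) \<bullet> g t (z (t - 1)))"
      by (simp add: G_def inner_sum_right inner_diff_left sum.distrib sum_subtractf algebra_simps)
    then show ?thesis using zmin by (simp add: \<Psi>_def a_def)
  qed
  have "\<Psi> T \<le> (INF u\<in>W. L / (2 * \<eta>) * (norm u)\<^sup>2
            + (\<Sum>t=1..T. f t (z (t - 1)) + (u - z (t - 1)) \<bullet> g t (z (t - 1))))"
    using W_zero bound by (intro cINF_greatest) auto
  moreover have "(\<Sum>t<T. E t) = \<eta> / (2 * L) * (\<Sum>t=0..<T. (norm (g (t + 1) (z t) - g t (z t)))\<^sup>2)"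
    by (simp add: E_def sum_distrib_left atLeast0LessThan)
  ultimately show ?thesis using main by linarith
qed

end
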